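(* Let $n$ be a nonnegative integer, let $p,q$ be nonnegative integers, and let $a,c,a_1,\dots,a_p,b_1,\dots,b_q,x\in\mathbb{C}$ be such that none of $a,\,1+a-c,\,c,\,b_1,\dots,b_q$ is zero or a negative integer. Then \[ {}_{p+3}F_{q+3}\!\left(\left.{-n,\frac{a}{2},\frac{a+1}{2},a_1,\ldots,a_p \atop a,1+a-c,c,b_1,\ldots,b_q}\right| x\right) =\sum_{m=0}^n \frac{(-n)_m(a_1)_m\cdots(a_p)_m\left(\frac{x}{4}\right)^m}{m!\,(1+a-c)_m(b_1)_m\cdots(b_q)_m}\; {}_{p+1}F_{q+1}\!\left(\left.{-n+m,a_1+m,\ldots,a_p+m \atop c,b_1+m,\ldots,b_q+m}\right| \frac{x}{4}\right). \]
   Context: For $a\in\mathbb{C}$, the rising factorial is $(a)_0=1$ and $(a)_k=a(a+1)\cdots(a+k-1)$ for $k\ge1$. For nonnegative integers $r,s$, the hypergeometric series is ${}_rF_s\!\left(\left.{\alpha_1,\ldots,\alpha_r\atop \beta_1,\ldots,\beta_s}\right|z\right)=\sum_{k\ge0}\frac{(\alpha_1)_k\cdots(\alpha_r)_k}{k!(\beta_1)_k\cdots(\beta_s)_k}z^k$, where no lower parameter $\beta_j$ is zero or a negative integer. If some upper parameter equals $-n$ with $n$ a nonnegative integer, the series terminates (is a finite sum over $0\le k\le n$). *)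

theory Defs
  imports "HOL-Analysis.Analysis"
begin

text \<open>In the terminating case
  only finitely many terms are nonzero, so the sum is a finite sum.\<close>

definition hyp_term :: "complex list \<Rightarrow> complex list \<Rightarrow> complex \<Rightarrow> nat \<Rightarrow> complex" where
  "hyp_term us ls z k =
     (\<Prod>u\<leftarrow>us. pochhammer u k) * z ^ k / (fact k * (\<Prod>l\<leftarrow>ls. pochhammer l k))"

definition hypF :: "complex list \<Rightarrow> complex list \<Rightarrow> complex \<Rightarrow> complex" where
  "hypF us ls z = (\<Sum>k. hyp_term us ls z k)"

end

theory Submission
  imports Defs "HOL-Computational_Algebra.Formal_Power_Series"
begin

definition PP :: "complex list \<Rightarrow> nat \<Rightarrow> complex" where
  "PP us k = (\<Prod>u\<leftarrow>us. pochhammer u k)"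

lemma PP_shift: "PP us m * PP (map (\<lambda>u. u + of_nat m) us) j = PP us (m + j)"
  by (induction us) (auto simp: PP_def pochhammer_product')

lemma poch_nz: "(z::complex) \<notin> \<int>\<^sub>\<le>\<^sub>0 \<Longrightarrow> pochhammer z k \<noteq> 0"
  using pochhammer_eq_0_imp_nonpos_Int by blast

lemma PP_nz: "\<forall>b\<in>set bs. b \<notin> \<int>\<^sub>\<le>\<^sub>0 \<Longrightarrow> PP bs k \<noteq> 0"
  by (induction bs) (auto simp: PP_def poch_nz)

lemma core:
  fixes a c :: complex
  assumes u: "1 + a - c \<notin> \<int>\<^sub>\<le>\<^sub>0" and c: "c \<notin> \<int>\<^sub>\<le>\<^sub>0"
  shows "pochhammer (a + of_nat k) k / (fact k * pochhammer (1+a-c) k * pochhammer c k) =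
    (\<Sum>m=0..k. 1 / (fact m * fact (k-m) * pochhammer (1+a-c) m * pochhammer c (k-m)))"
proof -
  define u where "u = 1 + a - c"
  define V where "V = c + of_nat k - 1"
  define U where "U = u + of_nat k - 1"
  have vdm: "(\<Sum>m=0..k. (V gchoose m) * (U gchoose (k-m))) = (V+U) gchoose k"
    by (rule gbinomial_Vandermonde)
  have uk: "pochhammer u k \<noteq> 0" using u poch_nz u_def by blast
  have ck: "pochhammer c k \<noteq> 0" using c poch_nz by blast
  have t: "(V gchoose m) * (U gchoose (k-m)) / (pochhammer u k * pochhammer c k)
      = 1 / (fact m * fact (k-m) * pochhammer u m * pochhammer c (k-m))" if "m \<in> {0..k}" for m
  proof -
    from that have mk: "m \<le> k" by simp
    have e1: "V gchoose m = pochhammer (c + of_nat (k-m)) m / fact m"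
      unfolding gbinomial_pochhammer' V_def using mk by (simp add: of_nat_diff algebra_simps)
    have e2: "U gchoose (k-m) = pochhammer (u + of_nat m) (k-m) / fact (k-m)"
      unfolding gbinomial_pochhammer' U_def using mk by (simp add: of_nat_diff algebra_simps)
    have p1: "pochhammer u k = pochhammer u m * pochhammer (u + of_nat m) (k-m)"
      using pochhammer_product'[of u m "k-m"] mk by simp
    have p2: "pochhammer c k = pochhammer c (k-m) * pochhammer (c + of_nat (k-m)) m"
      using pochhammer_product'[of c "k-m" m] mk by simp
    have nz1: "pochhammer (u + of_nat m) (k-m) \<noteq> 0" "pochhammer u m \<noteq> 0" using p1 uk by auto
    have nz2: "pochhammer (c + of_nat (k-m)) m \<noteq> 0" "pochhammer c (k-m) \<noteq> 0" using p2 ck by auto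
    show ?thesis unfolding e1 e2 p1 p2 using nz1 nz2 by (simp add: field_simps)
  qed
  have "(V+U) gchoose k = pochhammer (a + of_nat k) k / fact k"
    unfolding gbinomial_pochhammer' V_def U_def u_def by (simp add: algebra_simps)
  then have "pochhammer (a + of_nat k) k / (fact k * pochhammer u k * pochhammer c k)
      = (\<Sum>m=0..k. (V gchoose m) * (U gchoose (k-m))) / (pochhammer u k * pochhammer c k)"
    using vdm uk ck by (simp add: field_simps)
  also have "\<dots> = (\<Sum>m=0..k. (V gchoose m) * (U gchoose (k-m)) / (pochhammer u k * pochhammer c k))"
    by (simp add: sum_divide_distrib)
  also have "\<dots> = (\<Sum>m=0..k. 1 / (fact m * fact (k-m) * pochhammer u m * pochhammer c (k-m)))"
    using t by (rule sum.cong[OF refl])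
  finally show ?thesis unfolding u_def .
qed


lemma hypF_fin:
  assumes "\<And>k. k > N \<Longrightarrow> hyp_term us ls z k = 0"
  shows "hypF us ls z = (\<Sum>k\<le>N. hyp_term us ls z k)"
  unfolding hypF_def by (rule suminf_finite) (use assms in auto)

theorem proposition3p1:
  fixes n :: nat and a c x :: complex and as bs :: "complex list"
  assumes "a \<notin> \<int>\<^sub>\<le>\<^sub>0" and "1 + a - c \<notin> \<int>\<^sub>\<le>\<^sub>0" and "c \<notin> \<int>\<^sub>\<le>\<^sub>0"
    and "\<forall>b\<in>set bs. b \<notin> \<int>\<^sub>\<le>\<^sub>0"
  shows "hypF ([- of_nat n, a / 2, (a + 1) / 2] @ as) ([a, 1 + a - c, c] @ bs) x =
    (\<Sum>m = 0..n.
       pochhammer (- of_nat n) m * (\<Prod>ai\<leftarrow>as. pochhammer ai m) * (x / 4) ^ m /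
         (fact m * pochhammer (1 + a - c) m * (\<Prod>bi\<leftarrow>bs. pochhammer bi m))
       * hypF ((- of_nat n + of_nat m) # map (\<lambda>ai. ai + of_nat m) as)
              (c # map (\<lambda>bi. bi + of_nat m) bs) (x / 4))"
proof -
  define u where "u = 1 + a - c"
  have anz: "pochhammer a k \<noteq> 0" for k using assms(1) poch_nz by blast
  have unz: "pochhammer u k \<noteq> 0" for k using assms(2) poch_nz u_def by blast
  have cnz: "pochhammer c k \<noteq> 0" for k using assms(3) poch_nz by blast
  have bnz: "PP bs k \<noteq> 0" for k using assms(4) PP_nz by blast
  define T where "T k = pochhammer (- of_nat n) k * PP as k * (x/4)^k / PP bs k" for k
  define F where "F m j = pochhammer (- of_nat n) m * PP as m * (x / 4) ^ m /
         (fact m * pochhammer u m * PP bs m)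
       * hyp_term ((- of_nat n + of_nat m) # map (\<lambda>ai. ai + of_nat m) as)
              (c # map (\<lambda>bi. bi + of_nat m) bs) (x / 4) j" for m j
  have lhs_term: "hyp_term ([- of_nat n, a / 2, (a + 1) / 2] @ as) ([a, u, c] @ bs) x k
     = T k * (pochhammer (a + of_nat k) k / (fact k * pochhammer u k * pochhammer c k))" for k
  proof -
    have d: "pochhammer (a/2) k * pochhammer ((a+1)/2) k = pochhammer a k * pochhammer (a + of_nat k) k / 4^k"
    proof -
      have p4: "of_nat (2^(2*k)) = (4::complex)^k" by (simp add: power_mult)
      have h: "(a/2) + 1/2 = (a+1)/2" by (simp add: field_simps)
      have "pochhammer a (2*k) = 4^k * pochhammer (a/2) k * pochhammer ((a+1)/2) k"
        using pochhammer_double[of "a/2" k] unfolding p4 h by simp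
      moreover have "pochhammer a (2*k) = pochhammer a k * pochhammer (a + of_nat k) k"
        using pochhammer_product'[of a k k] by (simp add: mult_2)
      ultimately show ?thesis by (simp add: field_simps)
    qed
    show ?thesis unfolding hyp_term_def T_def
      apply (simp add: PP_def[symmetric] power_divide)
      using d anz unz cnz bnz apply (simp add: field_simps)
      done
  qed
  have L: "hypF ([- of_nat n, a / 2, (a + 1) / 2] @ as) ([a, u, c] @ bs) x
     = (\<Sum>k\<le>n. T k * (pochhammer (a + of_nat k) k / (fact k * pochhammer u k * pochhammer c k)))"
    unfolding lhs_term[symmetric]
    by (rule hypF_fin) (simp add: hyp_term_def pochhammer_of_nat_eq_0_iff)
  have inner: "hypF ((- of_nat n + of_nat m) # map (\<lambda>ai. ai + of_nat m) as)
              (c # map (\<lambda>bi. bi + of_nat m) bs) (x / 4) = 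
       (\<Sum>j\<le>n-m. hyp_term ((- of_nat n + of_nat m) # map (\<lambda>ai. ai + of_nat m) as)
              (c # map (\<lambda>bi. bi + of_nat m) bs) (x / 4) j)" if "m \<le> n" for m
  proof (rule hypF_fin)
    fix k assume "n - m < k"
    have "- of_nat n + of_nat m = - (of_nat (n - m) :: complex)" using that by (simp add: of_nat_diff)
    then show "hyp_term ((- of_nat n + of_nat m) # map (\<lambda>ai. ai + of_nat m) as)
              (c # map (\<lambda>bi. bi + of_nat m) bs) (x / 4) k = 0"
      using \<open>n - m < k\<close> by (simp add: hyp_term_def pochhammer_of_nat_eq_0_iff)
  qed
  have R: "(\<Sum>m = 0..n.
       pochhammer (- of_nat n) m * (\<Prod>ai\<leftarrow>as. pochhammer ai m) * (x / 4) ^ m /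
         (fact m * pochhammer u m * (\<Prod>bi\<leftarrow>bs. pochhammer bi m))
       * hypF ((- of_nat n + of_nat m) # map (\<lambda>ai. ai + of_nat m) as)
              (c # map (\<lambda>bi. bi + of_nat m) bs) (x / 4)) = (\<Sum>m = 0..n. \<Sum>j\<le>n-m. F m j)" (is "sum ?f _ = sum ?g _")
  proof (rule sum.cong[OF refl])
    fix m assume "m \<in> {0..n}"
    then have mn: "m \<le> n" by simp
    show "?f m = ?g m" unfolding inner[OF mn] F_def PP_def sum_distrib_left by (rule refl)
  qed
  also have "\<dots> = (\<Sum>(m,j)\<in>{(m,j). m + j \<le> n}. F m j)"
    by (subst sum.Sigma) (auto intro!: sum.cong)
  also have "\<dots> = (\<Sum>k\<le>n. \<Sum>m\<le>k. F m (k - m))"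
    by (rule sum.triangle_reindex_eq)
  also have "\<dots> = (\<Sum>k\<le>n. T k * (\<Sum>m=0..k. 1 / (fact m * fact (k-m) * pochhammer u m * pochhammer c (k-m))))"
  proof (rule sum.cong[OF refl])
    fix k assume "k \<in> {..n}"
    have "F m (k - m) = T k * (1 / (fact m * fact (k-m) * pochhammer u m * pochhammer c (k-m)))"
      if "m \<le> k" for m
    proof -
      define j where "j = k - m"
      have kj: "k = m + j" using that j_def by simp
      have e1: "pochhammer (- of_nat n) k = pochhammer (- of_nat n) m * pochhammer (- of_nat n + of_nat m) j"
        unfolding kj by (rule pochhammer_product')
      have e2: "PP as k = PP as m * PP (map (\<lambda>ai. ai + of_nat m) as) j"
        unfolding kj by (rule PP_shift[symmetric])
      have e3: "PP bs k = PP bs m * PP (map (\<lambda>ai. ai + of_nat m) bs) j"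
        unfolding kj by (rule PP_shift[symmetric])
      have e4: "(x/4)^k = (x/4)^m * (x/4)^j" unfolding kj by (rule power_add)
      have nz: "PP bs m \<noteq> 0" "PP (map (\<lambda>ai. ai + of_nat m) bs) j \<noteq> 0"
        using bnz[of k] e3 by auto
      show ?thesis
        unfolding F_def hyp_term_def T_def j_def[symmetric]
        apply (simp only: list.map prod_list.Cons PP_def[symmetric])
        unfolding e1 e2 e3 e4
        using nz unz cnz by (simp add: field_simps)
    qed
    then show "(\<Sum>m\<le>k. F m (k - m)) = T k * (\<Sum>m=0..k. 1 / (fact m * fact (k-m) * pochhammer u m * pochhammer c (k-m)))"
      by (simp add: sum_distrib_left atLeast0AtMost)
  qed
  also have "\<dots> = (\<Sum>k\<le>n. T k * (pochhammer (a + of_nat k) k / (fact k * pochhammer u k * pochhammer c k)))"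
    using core[OF assms(2,3)] unfolding u_def by simp
  also have "\<dots> = hypF ([- of_nat n, a / 2, (a + 1) / 2] @ as) ([a, u, c] @ bs) x"
    by (rule L[symmetric])
  finally have X: "(\<Sum>m = 0..n.
       pochhammer (- of_nat n) m * (\<Prod>ai\<leftarrow>as. pochhammer ai m) * (x / 4) ^ m /
         (fact m * pochhammer u m * (\<Prod>bi\<leftarrow>bs. pochhammer bi m))
       * hypF ((- of_nat n + of_nat m) # map (\<lambda>ai. ai + of_nat m) as)
              (c # map (\<lambda>bi. bi + of_nat m) bs) (x / 4)) = hypF ([- of_nat n, a / 2, (a + 1) / 2] @ as) ([a, u, c] @ bs) x" .
  from X show ?thesis unfolding u_def by (rule sym)
qed

end
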